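(* Let $\mu>0$ and suppose Assumptions A and B below hold. For any given $(\bar{\mathbf{x}},\bar y)\in\mathrm{dom}\,g\times\mathrm{dom}\,h$ and $\eta_y>0$, with $\bar y^+=\mathrm{prox}_{\eta_yh}(\bar y+\eta_ys_y(\bar{\mathbf{x}},\bar y;\boldsymbol\zeta))$, $$2\eta_y\langle\tilde G_y(\bar{\mathbf{x}},\bar y;\boldsymbol\zeta),\bar y-y_*(\bar{\mathbf{x}})\rangle+\eta_y^2\|\tilde G_y(\bar{\mathbf{x}},\bar y;\boldsymbol\zeta)\|^2\le-\eta_y\mu\|\bar y-y_*(\bar{\mathbf{x}})\|^2-\eta_y^2(1-L\eta_y)\|\tilde G_y(\bar{\mathbf{x}},\bar y;\boldsymbol\zeta)\|^2+2\eta_y\langle s_y(\bar{\mathbf{x}},\bar y;\boldsymbol\zeta)-\nabla_yf(\bar{\mathbf{x}},\bar y),\bar y^+-y_*(\bar{\mathbf{x}})\rangle.$$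
   Context: Setting. $\mathcal{X}_i=\mathbb{R}^{n_i}$, $\mathcal{X}=\prod_{i=1}^N\mathcal{X}_i$, $\mathcal{Y}$ finite-dimensional Euclidean; $g(\mathbf{x})=\sum_ig_i(x_i)$; $\mathrm{prox}_\phi(u)=\arg\min_v\phi(v)+\frac12\|v-u\|^2$. Assumption A: $g_i$, $h$ closed convex; $f$ differentiable on an open set containing $\mathrm{dom}\,g\times\mathrm{dom}\,h$, $\nabla f$ $L$-Lipschitz there, $f(\mathbf{x},\cdot)$ $\mu$-strongly concave for each $\mathbf{x}\in\mathrm{dom}\,g$. $y_*(\mathbf{x})=\arg\max_yf(\mathbf{x},y)-h(y)$. Assumption B: unbiased stochastic oracle $\tilde\nabla_yf(\mathbf{x},y;\zeta)$ for $\nabla_yf$ with variance at most $\sigma_y^2$ at every point of $\mathrm{dom}\,g\times\mathrm{dom}\,h$. $\boldsymbol\zeta=[\zeta_j]_{j=1}^{M_y}$ i.i.d. samples, $s_y(\mathbf{x},y;\boldsymbol\zeta)=\frac1{M_y}\sum_j\tilde\nabla_yf(\mathbf{x},y;\zeta_j)$, $\tilde G_y(\mathbf{x},y;\boldsymbol\zeta)=[\mathrm{prox}_{\eta_yh}(y+\eta_ys_y)-y]/\eta_y$. *)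

theory Defs
  imports "HOL-Analysis.Analysis" "HOL-Probability.Probability"
begin

definition edom :: "('a \<Rightarrow> ereal) \<Rightarrow> 'a set" where
  "edom \<phi> = {v. \<phi> v < \<infinity>}"

definition closed_convex_fun :: "('a::real_normed_vector \<Rightarrow> ereal) \<Rightarrow> bool" where
  "closed_convex_fun \<phi> \<longleftrightarrow>
     (\<forall>v. \<phi> v \<noteq> -\<infinity>) \<and> edom \<phi> \<noteq> {} \<and>
     convex {(v, t::real). \<phi> v \<le> ereal t} \<and>
     closed {(v, t::real). \<phi> v \<le> ereal t}"

definition prox :: "('a::real_normed_vector \<Rightarrow> ereal) \<Rightarrow> 'a \<Rightarrow> 'a" where
  "prox \<phi> u = (SOME v. \<forall>w. \<phi> v + ereal ((norm (v - u))\<^sup>2 / 2) \<le> \<phi> w + ereal ((norm (w - u))\<^sup>2 / 2))"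

definition scale_fun :: "real \<Rightarrow> ('a \<Rightarrow> ereal) \<Rightarrow> 'a \<Rightarrow> ereal" where
  "scale_fun \<eta> \<phi> = (\<lambda>v. ereal \<eta> * \<phi> v)"

definition strongly_concave_on :: "real \<Rightarrow> 'a::real_normed_vector set \<Rightarrow> ('a \<Rightarrow> real) \<Rightarrow> bool" where
  "strongly_concave_on \<mu> S F \<longleftrightarrow> convex S \<and>
     (\<forall>a\<in>S. \<forall>b\<in>S. \<forall>t\<in>{0..1}.
        t * F a + (1 - t) * F b + \<mu> / 2 * t * (1 - t) * (norm (a - b))\<^sup>2 \<le> F (t *\<^sub>R a + (1 - t) *\<^sub>R b))"

(* Block structure: coordinates of real^'n are partitioned into blocks indexed by 'k via blk;
   x_i is the i-th block of x (embedded with zeros elsewhere). *)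
definition block_part :: "('n \<Rightarrow> 'k) \<Rightarrow> 'k \<Rightarrow> real^'n \<Rightarrow> real^'n" where
  "block_part blk i x = (\<chi> j. if blk j = i then x $ j else 0)"

definition block_sum :: "('n \<Rightarrow> 'k::finite) \<Rightarrow> ('k \<Rightarrow> real^'n \<Rightarrow> ereal) \<Rightarrow> real^'n \<Rightarrow> ereal" where
  "block_sum blk gs x = (\<Sum>i\<in>UNIV. gs i (block_part blk i x))"

definition ystar :: "('x \<times> 'y \<Rightarrow> real) \<Rightarrow> ('y \<Rightarrow> ereal) \<Rightarrow> 'x \<Rightarrow> 'y" where
  "ystar f h x = (SOME y. \<forall>y'. ereal (f (x, y')) - h y' \<le> ereal (f (x, y)) - h y)"

definition s_y :: "('x \<Rightarrow> 'y \<Rightarrow> 'z \<Rightarrow> 'y::real_vector) \<Rightarrow> nat \<Rightarrow> 'x \<Rightarrow> 'y \<Rightarrow> (nat \<Rightarrow> 'z) \<Rightarrow> 'y" where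
  "s_y orc My x y \<zeta> = (1 / real My) *\<^sub>R (\<Sum>j<My. orc x y (\<zeta> j))"

definition G_y :: "('y::real_normed_vector \<Rightarrow> ereal) \<Rightarrow> real \<Rightarrow> ('x \<Rightarrow> 'y \<Rightarrow> 'z \<Rightarrow> 'y) \<Rightarrow> nat
     \<Rightarrow> 'x \<Rightarrow> 'y \<Rightarrow> (nat \<Rightarrow> 'z) \<Rightarrow> 'y" where
  "G_y h \<eta> orc My x y \<zeta> = (1 / \<eta>) *\<^sub>R (prox (scale_fun \<eta> h) (y + \<eta> *\<^sub>R s_y orc My x y \<zeta>) - y)"

end

theory Submission
  imports Defs
begin


lemma cc_not_minf: "closed_convex_fun h \<Longrightarrow> h v \<noteq> -\<infinity>"
  by (simp add: closed_convex_fun_def)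

lemma cc_fin: "closed_convex_fun h \<Longrightarrow> v \<in> edom h \<Longrightarrow> h v = ereal (real_of_ereal (h v))"
  by (cases "h v") (auto simp: edom_def closed_convex_fun_def)

lemma roe_le: "x \<noteq> -\<infinity> \<Longrightarrow> x \<le> ereal X \<Longrightarrow> real_of_ereal x \<le> X"
  by (cases x) auto

lemma cc_ineq:
  fixes h :: "'a::real_normed_vector \<Rightarrow> ereal"
  assumes hcc: "closed_convex_fun h" and a: "a \<in> edom h" and b: "b \<in> edom h" and t: "0 \<le> t" "t \<le> 1"
  shows "t *\<^sub>R a + (1-t) *\<^sub>R b \<in> edom h \<and>
    real_of_ereal (h (t *\<^sub>R a + (1-t) *\<^sub>R b)) \<le> t * real_of_ereal (h a) + (1-t) * real_of_ereal (h b)"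
proof -
  let ?E = "{(v, s::real). h v \<le> ereal s}"
  have cE: "convex ?E" using hcc by (simp add: closed_convex_fun_def)
  have "h a \<le> ereal (real_of_ereal (h a))" by (rule eq_refl[OF cc_fin[OF hcc a]])
  then have "(a, real_of_ereal (h a)) \<in> ?E" by simp
  moreover have "h b \<le> ereal (real_of_ereal (h b))" by (rule eq_refl[OF cc_fin[OF hcc b]])
  then have "(b, real_of_ereal (h b)) \<in> ?E" by simp
  ultimately have "t *\<^sub>R (a, real_of_ereal (h a)) + (1-t) *\<^sub>R (b, real_of_ereal (h b)) \<in> ?E"
    by (rule convexD[OF cE]) (use t in auto)
  then have le: "h (t *\<^sub>R a + (1-t) *\<^sub>R b) \<le> ereal (t * real_of_ereal (h a) + (1-t) * real_of_ereal (h b))"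
    by simp
  have "h (t *\<^sub>R a + (1-t) *\<^sub>R b) < \<infinity>" using le by (rule le_less_trans) simp
  then have "t *\<^sub>R a + (1-t) *\<^sub>R b \<in> edom h" unfolding edom_def by simp
  then show ?thesis using roe_le[OF cc_not_minf[OF hcc] le] by simp
qed

lemma affine_minorant:
  fixes h :: "'a::euclidean_space \<Rightarrow> ereal"
  assumes hcc: "closed_convex_fun h"
  shows "\<exists>\<alpha> \<beta>. \<forall>v. ereal (\<alpha> \<bullet> v + \<beta>) \<le> h v"
proof -
  let ?E = "{(v, s::real). h v \<le> ereal s}"
  have cE: "convex ?E" and clE: "closed ?E" using hcc by (simp_all add: closed_convex_fun_def)
  obtain p where p: "p \<in> edom h" using hcc by (auto simp: closed_convex_fun_def)
  obtain r where hp: "h p = ereal r"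
    using p cc_not_minf[OF hcc, of p] by (cases "h p") (auto simp: edom_def)
  have "(p, r - 1) \<notin> ?E" using hp by simp
  then obtain a b where ab: "a \<bullet> (p, r - 1) < b" "\<forall>x\<in>?E. a \<bullet> x > b"
    using separating_hyperplane_closed_point[OF cE clE] by blast
  obtain a1 a2 where a: "a = (a1, a2)" by (cases a)
  have "(p, r) \<in> ?E" using hp by simp
  then have "b < a1 \<bullet> p + a2 * r" using ab a by auto
  moreover have "a1 \<bullet> p + a2 * (r - 1) < b" using ab a by auto
  ultimately have a2: "a2 > 0" by (simp add: algebra_simps)
  have "ereal ((-(1/a2) *\<^sub>R a1) \<bullet> v + b / a2) \<le> h v" for v
  proof (cases "h v = \<infinity>")
    case False
    then obtain s where s: "h v = ereal s" using cc_not_minf[OF hcc] by (cases "h v") auto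
    then have "(v, s) \<in> ?E" by simp
    then have "b < a1 \<bullet> v + a2 * s" using ab a by auto
    then have "(-(1/a2) *\<^sub>R a1) \<bullet> v + b / a2 \<le> s" using a2
      by (simp add: field_simps)
    then show ?thesis using s by simp
  qed simp
  then show ?thesis by blast
qed

lemma eps_le:
  fixes a b :: real
  assumes "\<And>t. 0 < t \<Longrightarrow> t \<le> 1 \<Longrightarrow> 0 \<le> a + t * b"
  shows "0 \<le> a"
proof (rule ccontr)
  assume a: "\<not> 0 \<le> a"
  show False
  proof (cases "b \<le> 0")
    case True
    then show False using assms[of 1] a by simp
  next
    case False
    define t where "t = min 1 (-a / (2*b))"
    have "-a / (2*b) > 0" using a False by (intro divide_pos_pos) auto
    then have t0: "0 < t" "t \<le> 1" by (auto simp: t_def)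
    have "t * b \<le> (-a/(2*b)) * b" using False by (intro mult_right_mono) (auto simp: t_def)
    also have "\<dots> = -a/2" using False by (simp add: field_simps)
    finally show False using assms[OF t0] a by linarith
  qed
qed

lemma norm_add_scale_sq:
  fixes x y :: "'a::real_inner"
  shows "(norm (x + t *\<^sub>R y))\<^sup>2 = (norm x)\<^sup>2 + 2 * t * (x \<bullet> y) + t\<^sup>2 * (norm y)\<^sup>2"
  unfolding power2_norm_eq_inner by (simp add: inner_add_left inner_add_right algebra_simps power2_eq_square inner_commute)

lemma aux_alg:
  fixes e hv hw t N X M :: real
  shows "e * hv + N / 2 \<le> e * (t * hw + (1 - t) * hv) + (N + 2 * t * X + t\<^sup>2 * M) / 2
    \<Longrightarrow> 0 \<le> t * ((e * (hw - hv) + X) + t * (M / 2))"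
  by (simp add: field_simps power2_eq_square)
lemma prox_opt:
  fixes h :: "'a::euclidean_space \<Rightarrow> ereal"
  assumes hcc: "closed_convex_fun h" and eta: "\<eta> > 0" and v: "v \<in> edom h"
    and mn: "\<And>w. w \<in> edom h \<Longrightarrow> \<eta> * real_of_ereal (h v) + (norm (v - u))\<^sup>2 / 2
               \<le> \<eta> * real_of_ereal (h w) + (norm (w - u))\<^sup>2 / 2"
    and w: "w \<in> edom h"
  shows "\<eta> * real_of_ereal (h v) + (u - v) \<bullet> (w - v) \<le> \<eta> * real_of_ereal (h w)"
proof -
  let ?hv = "real_of_ereal (h v)" and ?hw = "real_of_ereal (h w)"
  have "0 \<le> (\<eta> * (?hw - ?hv) + (v - u) \<bullet> (w - v)) + t * ((norm (w - v))\<^sup>2 / 2)"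
    if t: "0 < t" "t \<le> 1" for t
  proof -
    note c = cc_ineq[OF hcc w v, of t]
    let ?wt = "t *\<^sub>R w + (1 - t) *\<^sub>R v"
    have e: "?wt - u = (v - u) + t *\<^sub>R (w - v)" by (simp add: algebra_simps)
    have "\<eta> * ?hv + (norm (v - u))\<^sup>2 / 2 \<le> \<eta> * real_of_ereal (h ?wt) + (norm (?wt - u))\<^sup>2 / 2"
      using mn c t by simp
    also have "\<dots> \<le> \<eta> * (t * ?hw + (1 - t) * ?hv) + (norm (?wt - u))\<^sup>2 / 2"
      using c t eta by (intro add_right_mono mult_left_mono) auto
    finally have "\<eta> * ?hv + (norm (v - u))\<^sup>2 / 2 \<le> \<eta> * (t * ?hw + (1 - t) * ?hv)
       + ((norm (v - u))\<^sup>2 + 2 * t * ((v - u) \<bullet> (w - v)) + t\<^sup>2 * (norm (w - v))\<^sup>2) / 2"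
      unfolding e norm_add_scale_sq .
    then have "0 \<le> t * ((\<eta> * (?hw - ?hv) + (v - u) \<bullet> (w - v)) + t * ((norm (w - v))\<^sup>2 / 2))"
      by (rule aux_alg)
    then show ?thesis using t by (simp add: zero_le_mult_iff)
  qed
  then have "0 \<le> \<eta> * (?hw - ?hv) + (v - u) \<bullet> (w - v)" by (rule eps_le)
  then show ?thesis by (simp add: algebra_simps inner_diff_left inner_diff_right)
qed

lemma quad_bound:
  fixes r A B \<kappa> :: real
  assumes "\<kappa> > 0" "r \<ge> 0" "\<kappa> * r\<^sup>2 - A * r \<le> B"
  shows "r \<le> max 1 ((\<bar>A\<bar> + \<bar>B\<bar>) / \<kappa>)"
proof (cases "r \<le> 1")
  case False
  have "\<kappa> * r * r \<le> \<bar>B\<bar> * r + \<bar>A\<bar> * r"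
  proof -
    have "\<bar>B\<bar> * 1 \<le> \<bar>B\<bar> * r" using False by (intro mult_left_mono) auto
    then have "B \<le> \<bar>B\<bar> * r" by linarith
    moreover have "A * r \<le> \<bar>A\<bar> * r" using False by (intro mult_right_mono) auto
    ultimately show ?thesis using assms(3) by (simp add: power2_eq_square)
  qed
  then have "r * (\<kappa> * r) \<le> r * (\<bar>A\<bar> + \<bar>B\<bar>)" by (simp add: algebra_simps)
  then have "\<kappa> * r \<le> \<bar>A\<bar> + \<bar>B\<bar>" by (rule mult_left_le_imp_le[of r]) (use False in auto)
  then have "r \<le> (\<bar>A\<bar> + \<bar>B\<bar>) / \<kappa>" using assms(1) by (simp add: field_simps)
  then show ?thesis by simp
qed simp

lemma min_exists:
  fixes h :: "'a::euclidean_space \<Rightarrow> ereal" and \<phi> :: "'a \<Rightarrow> real"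
  assumes hcc: "closed_convex_fun h" and eta: "\<eta> > 0" and cont: "continuous_on UNIV \<phi>"
    and kap: "\<kappa> > 0"
    and lb: "\<And>v. v \<in> edom h \<Longrightarrow> \<gamma> \<bullet> v + \<delta> + \<kappa> * (norm (v - c))\<^sup>2 \<le> \<phi> v"
  shows "\<exists>v\<in>edom h. \<forall>w\<in>edom h. \<eta> * real_of_ereal (h v) + \<phi> v \<le> \<eta> * real_of_ereal (h w) + \<phi> w"
proof -
  define hr where "hr = (\<lambda>v. real_of_ereal (h v))"
  have hfin: "h v = ereal (hr v)" if "v \<in> edom h" for v
    unfolding hr_def by (rule cc_fin[OF hcc that])
  obtain \<alpha> \<beta> where ab: "\<And>v. ereal (\<alpha> \<bullet> v + \<beta>) \<le> h v" using affine_minorant[OF hcc] by blast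
  obtain p where p: "p \<in> edom h" using hcc by (auto simp: closed_convex_fun_def)
  define C where "C = \<eta> * hr p + \<phi> p"
  define \<Phi> where "\<Phi> = (\<lambda>z::'a \<times> real. \<eta> * snd z + \<phi> (fst z))"
  define K where "K = {(v, s::real). h v \<le> ereal s} \<inter> {z. \<Phi> z \<le> C}"
  have c1: "continuous_on UNIV (\<lambda>z::'a \<times> real. \<phi> (fst z))"
    by (rule continuous_on_compose2[OF cont continuous_on_fst[OF continuous_on_id]]) auto
  have c2: "continuous_on UNIV (\<lambda>z::'a \<times> real. \<eta> * snd z)"
    by (rule continuous_on_mult_left[OF continuous_on_snd[OF continuous_on_id]])
  have cPhi: "continuous_on UNIV \<Phi>" unfolding \<Phi>_def
    by (rule continuous_on_add[OF c2 c1])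
  have cl1: "closed {(v, s::real). h v \<le> ereal s}" using hcc by (simp add: closed_convex_fun_def)
  have cl2: "closed {z. \<Phi> z \<le> C}" by (rule closed_Collect_le[OF cPhi continuous_on_const])
  have "closed K" unfolding K_def by (rule closed_Int[OF cl1 cl2])
  moreover
  define A where "A = \<eta> * norm \<alpha> + norm \<gamma>"
  define B where "B = C - \<eta> * \<beta> - \<eta> * (\<alpha> \<bullet> c) - \<gamma> \<bullet> c - \<delta>"
  define R where "R = max 1 ((\<bar>A\<bar> + \<bar>B\<bar>) / \<kappa>) + norm c"
  define S1 where "S1 = norm \<alpha> * R + \<bar>\<beta>\<bar> + (\<bar>C\<bar> + norm \<gamma> * R + \<bar>\<delta>\<bar>) / \<eta>"
  have "max 1 ((\<bar>A\<bar> + \<bar>B\<bar>) / \<kappa>) \<ge> 1" by simp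
  then have R1: "R \<ge> 0" using norm_ge_zero[of c] unfolding R_def by linarith
  have bnd: "norm z \<le> R + S1" if z: "z \<in> K" for z
  proof -
    obtain v s where zv: "z = (v, s)" by (cases z)
    have hv: "h v \<le> ereal s" and Ph: "\<eta> * s + \<phi> v \<le> C" using z zv by (auto simp: K_def \<Phi>_def)
    have "h v < \<infinity>" using hv by (rule le_less_trans) simp
    then have vd: "v \<in> edom h" by (simp add: edom_def)
    have "ereal (\<alpha> \<bullet> v + \<beta>) \<le> ereal s" by (rule order_trans[OF ab hv])
    then have as: "\<alpha> \<bullet> v + \<beta> \<le> s" by simp
    define r where "r = norm (v - c)"
    have l: "\<gamma> \<bullet> v + \<delta> + \<kappa> * r\<^sup>2 \<le> \<phi> v" using lb[OF vd] unfolding r_def .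
    have r0: "r \<ge> 0" by (simp add: r_def)
    have cs: "- (norm x * r) \<le> x \<bullet> (v - c)" for x
    proof -
      have "\<bar>x \<bullet> (v - c)\<bar> \<le> norm x * r" unfolding r_def by (rule Cauchy_Schwarz_ineq2)
      then show ?thesis by (rule abs_le_D2[THEN minus_le_iff[THEN iffD1]])
    qed
    have ia: "\<alpha> \<bullet> v \<ge> - (norm \<alpha> * r) + \<alpha> \<bullet> c"
      using cs[of \<alpha>] by (simp add: inner_diff_right)
    have ig: "\<gamma> \<bullet> v \<ge> - (norm \<gamma> * r) + \<gamma> \<bullet> c"
      using cs[of \<gamma>] by (simp add: inner_diff_right)
    have "\<eta> * (\<alpha> \<bullet> v + \<beta>) \<le> \<eta> * s" using as eta by simp
    moreover have "\<eta> * (\<alpha> \<bullet> v + \<beta>) = \<eta> * (\<alpha> \<bullet> v) + \<eta> * \<beta>" by (simp add: distrib_left)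
    moreover have "\<eta> * (\<alpha> \<bullet> v) \<ge> \<eta> * (- (norm \<alpha> * r) + \<alpha> \<bullet> c)" using ia eta by simp
    moreover have "\<eta> * (- (norm \<alpha> * r) + \<alpha> \<bullet> c) = - ((\<eta> * norm \<alpha>) * r) + \<eta> * (\<alpha> \<bullet> c)"
      by (simp add: algebra_simps)
    moreover have "A * r = (\<eta> * norm \<alpha>) * r + norm \<gamma> * r" by (simp add: A_def algebra_simps)
    ultimately have "\<kappa> * r\<^sup>2 - A * r \<le> B" using ig Ph l unfolding B_def by linarith
    then have rR: "r \<le> max 1 ((\<bar>A\<bar> + \<bar>B\<bar>) / \<kappa>)" by (rule quad_bound[OF kap r0])
    have "norm v \<le> norm c + norm (v - c)" by (rule norm_triangle_sub)
    then have nv: "norm v \<le> R" using rR unfolding R_def r_def by linarith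
    have nvc: "\<bar>x \<bullet> v\<bar> \<le> norm x * R" for x
    proof -
      have "\<bar>x \<bullet> v\<bar> \<le> norm x * norm v" by (rule Cauchy_Schwarz_ineq2)
      also have "\<dots> \<le> norm x * R" by (rule mult_left_mono[OF nv norm_ge_zero])
      finally show ?thesis .
    qed
    have na: "- (norm \<alpha> * R) \<le> \<alpha> \<bullet> v" by (rule abs_le_D2[OF nvc, THEN minus_le_iff[THEN iffD1]])
    have ng: "- (norm \<gamma> * R) \<le> \<gamma> \<bullet> v" by (rule abs_le_D2[OF nvc, THEN minus_le_iff[THEN iffD1]])
    have s_lo: "s \<ge> - (norm \<alpha> * R) + \<beta>" using as na by linarith
    have "\<kappa> * r\<^sup>2 \<ge> 0" using kap by simp
    then have "\<phi> v \<ge> - (norm \<gamma> * R) + \<delta>" using l ng by linarith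
    then have "\<eta> * s \<le> \<bar>C\<bar> + norm \<gamma> * R + \<bar>\<delta>\<bar>" using Ph by linarith
    then have s_hi: "s \<le> (\<bar>C\<bar> + norm \<gamma> * R + \<bar>\<delta>\<bar>) / \<eta>" using eta by (simp add: field_simps)
    have "norm \<alpha> * R \<ge> 0" "norm \<gamma> * R \<ge> 0" using R1 by simp_all
    moreover have "(\<bar>C\<bar> + norm \<gamma> * R + \<bar>\<delta>\<bar>) / \<eta> \<ge> 0" using R1 eta by simp
    ultimately have "\<bar>s\<bar> \<le> S1" using s_lo s_hi unfolding S1_def abs_le_iff by linarith
    moreover have "norm z \<le> norm v + norm s" unfolding zv by (rule norm_Pair_le)
    ultimately show ?thesis using nv by simp
  qed
  then have "bounded K" unfolding bounded_iff by (intro exI[of _ "R + S1"] ballI)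
  ultimately have cK: "compact K" by (simp add: compact_eq_bounded_closed)
  have "h p \<le> ereal (hr p)" using hfin[OF p] by simp
  then have pK: "(p, hr p) \<in> K" unfolding K_def \<Phi>_def C_def by simp
  then have Kne: "K \<noteq> {}" by blast
  obtain z0 where z0: "z0 \<in> K" "\<And>z. z \<in> K \<Longrightarrow> \<Phi> z0 \<le> \<Phi> z"
    using continuous_attains_inf[OF cK Kne continuous_on_subset[OF cPhi]] by blast
  obtain v0 s0 where zv: "z0 = (v0, s0)" by (cases z0)
  have hv: "h v0 \<le> ereal s0" and Ph: "\<Phi> z0 \<le> C" using z0 zv by (auto simp: K_def)
  have "h v0 < \<infinity>" using hv by (rule le_less_trans) simp
  then have vd: "v0 \<in> edom h" by (simp add: edom_def)
  have "ereal (hr v0) \<le> ereal s0" using hv hfin[OF vd] by simp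
  then have "hr v0 \<le> s0" by simp
  then have v1: "\<eta> * hr v0 + \<phi> v0 \<le> \<Phi> z0" using eta by (simp add: zv \<Phi>_def)
  have "\<eta> * hr v0 + \<phi> v0 \<le> \<eta> * hr w + \<phi> w" if w: "w \<in> edom h" for w
  proof (cases "(w, hr w) \<in> K")
    case True
    then show ?thesis using z0(2)[OF True] v1 by (simp add: \<Phi>_def)
  next
    case False
    have "h w \<le> ereal (hr w)" using hfin[OF w] by simp
    then have "\<not> \<Phi> (w, hr w) \<le> C" using False by (simp add: K_def)
    then show ?thesis using v1 Ph by (simp add: \<Phi>_def)
  qed
  then show ?thesis using vd unfolding hr_def by blast
qed

lemma path_deriv:
  fixes f :: "('x::real_inner) \<times> ('y::real_inner) \<Rightarrow> real"
  assumes z: "(x, a + t *\<^sub>R d) \<in> U"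
    and fd: "\<And>z. z \<in> U \<Longrightarrow> (f has_derivative (\<lambda>v. gradf z \<bullet> v)) (at z)"
  shows "((\<lambda>s. f (x, a + s *\<^sub>R d)) has_real_derivative (snd (gradf (x, a + t *\<^sub>R d)) \<bullet> d)) (at t)"
proof -
  have p: "((\<lambda>s. (x, a + s *\<^sub>R d)) has_derivative (\<lambda>s. (0, s *\<^sub>R d))) (at t)"
    by (auto intro!: derivative_eq_intros)
  have "(f \<circ> (\<lambda>s. (x, a + s *\<^sub>R d)) has_derivative (\<lambda>v. gradf (x, a + t *\<^sub>R d) \<bullet> v) \<circ> (\<lambda>s. (0, s *\<^sub>R d))) (at t)"
    by (rule diff_chain_at[OF p]) (use fd[OF z] in simp)
  moreover have "(\<lambda>v. gradf (x, a + t *\<^sub>R d) \<bullet> v) \<circ> (\<lambda>s. (0, s *\<^sub>R d)) = (*) (snd (gradf (x, a + t *\<^sub>R d)) \<bullet> d)"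
    by (auto simp: inner_Pair_0 algebra_simps)
  ultimately show ?thesis unfolding has_field_derivative_def comp_def by simp
qed

lemma sc_all:
  assumes "strongly_concave_on \<mu> UNIV F" "t \<in> {0..1}"
  shows "t * F a + (1 - t) * F b + \<mu> / 2 * t * (1 - t) * (norm (a - b))\<^sup>2 \<le> F (t *\<^sub>R a + (1 - t) *\<^sub>R b)"
  using assms unfolding strongly_concave_on_def by blast

lemma sc_first_order:
  fixes F :: "'a::real_normed_vector \<Rightarrow> real"
  assumes sc: "strongly_concave_on \<mu> UNIV F"
    and der: "((\<lambda>s. F (a + s *\<^sub>R d)) has_real_derivative D) (at 0)"
  shows "F (a + d) \<le> F a + D - \<mu> / 2 * (norm d)\<^sup>2"
proof -
  let ?q = "\<lambda>t. (F (a + t *\<^sub>R d) - F (a + 0 *\<^sub>R d)) / (t - 0)"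
  have "((\<lambda>s. F (a + s *\<^sub>R d)) has_real_derivative D) (at 0 within {0<..})"
    using der by (rule has_field_derivative_at_within)
  then have lim1: "(?q \<longlongrightarrow> D) (at_right 0)" unfolding has_field_derivative_iff .
  have lim2: "((\<lambda>t. F (a + d) - F a + \<mu> / 2 * (1 - t) * (norm d)\<^sup>2) \<longlongrightarrow> F (a + d) - F a + \<mu> / 2 * (1 - 0) * (norm d)\<^sup>2) (at_right 0)"
    by (intro tendsto_intros)
  have ev: "\<forall>\<^sub>F t in at_right 0. F (a + d) - F a + \<mu> / 2 * (1 - t) * (norm d)\<^sup>2 \<le> ?q t"
    unfolding eventually_at_right_field
  proof (intro exI[of _ 1] conjI allI impI)
    fix t :: real assume t: "t > 0" "t < 1"
    have "t * F (a + d) + (1 - t) * F a + \<mu> / 2 * t * (1 - t) * (norm (a + d - a))\<^sup>2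
        \<le> F (t *\<^sub>R (a + d) + (1 - t) *\<^sub>R a)"
      using sc_all[OF sc, of t "a + d" a] t by simp
    moreover have "t *\<^sub>R (a + d) + (1 - t) *\<^sub>R a = a + t *\<^sub>R d" by (simp add: algebra_simps)
    ultimately have "t * (F (a + d) - F a + \<mu> / 2 * (1 - t) * (norm d)\<^sup>2) \<le> F (a + t *\<^sub>R d) - F a"
      by (simp add: algebra_simps)
    then show "F (a + d) - F a + \<mu> / 2 * (1 - t) * (norm d)\<^sup>2 \<le> ?q t"
      using t by (simp add: field_simps)
  qed simp
  have "F (a + d) - F a + \<mu> / 2 * (1 - 0) * (norm d)\<^sup>2 \<le> D"
    by (rule tendsto_le[OF _ lim1 lim2 ev]) simp
  then show ?thesis by simp
qed

lemma descent:
  fixes G gr :: "real \<Rightarrow> real"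
  assumes der: "\<And>s. 0 \<le> s \<Longrightarrow> s \<le> 1 \<Longrightarrow> (G has_real_derivative gr s) (at s)"
    and lip: "\<And>s. 0 \<le> s \<Longrightarrow> s \<le> 1 \<Longrightarrow> gr s - gr 0 \<ge> - (L * s * K)"
  shows "G 1 \<ge> G 0 + gr 0 - L / 2 * K"
proof -
  define \<psi> where "\<psi> = (\<lambda>s. G s - s * gr 0 + L / 2 * s\<^sup>2 * K)"
  have d: "(\<psi> has_real_derivative (gr s - gr 0 + L * s * K)) (at s)" if "0 \<le> s" "s \<le> 1" for s
    unfolding \<psi>_def using der[OF that] by (auto intro!: derivative_eq_intros simp: algebra_simps)
  have "\<psi> 0 \<le> \<psi> 1"
  proof (rule DERIV_nonneg_imp_increasing_open[of 0 1])
    fix s :: real assume s: "0 < s" "s < 1"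
    have "(\<psi> has_real_derivative (gr s - gr 0 + L * s * K)) (at s)" using d s by simp
    moreover have "0 \<le> gr s - gr 0 + L * s * K" using lip[of s] s by simp
    ultimately show "\<exists>y. (\<psi> has_real_derivative y) (at s) \<and> 0 \<le> y" by blast
  next
    show "continuous_on {0..1} \<psi>"
      by (rule DERIV_continuous_on[of _ _ "\<lambda>s. gr s - gr 0 + L * s * K"])
         (use d in \<open>auto intro: has_field_derivative_at_within\<close>)
  qed simp
  then show ?thesis by (simp add: \<psi>_def)
qed




lemma norm_snd_le': "norm (snd z) \<le> norm z"
  by (cases z) (simp add: norm_snd_le)

lemma final_alg:
  fixes e c a g m d L :: real
  shows "0 \<le> 2 * e * (c - a - e * g - m / 2 * d + L / 2 * (e\<^sup>2 * g)) \<Longrightarrow>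
    2 * e * a + e\<^sup>2 * g \<le> - e * m * d - e\<^sup>2 * (1 - L * e) * g + 2 * e * c"
  by (simp add: algebra_simps power2_eq_square)

theorem corollary1:
  fixes blk :: "'n::finite \<Rightarrow> 'k::finite"
    and gs :: "'k \<Rightarrow> real^'n \<Rightarrow> ereal"
    and h :: "'y::euclidean_space \<Rightarrow> ereal"
    and f :: "(real^'n) \<times> 'y \<Rightarrow> real"
    and gradf :: "(real^'n) \<times> 'y \<Rightarrow> (real^'n) \<times> 'y"
    and U :: "((real^'n) \<times> 'y) set"
    and L \<mu> \<sigma>y \<eta>y :: real
    and D :: "'z measure"
    and orc :: "real^'n \<Rightarrow> 'y \<Rightarrow> 'z \<Rightarrow> 'y"
    and My :: nat and \<zeta> :: "nat \<Rightarrow> 'z"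
    and xbar :: "real^'n" and ybar :: 'y
  assumes mu_pos: "\<mu> > 0"
    (* Assumption A *)
    and g_cc: "\<And>i. closed_convex_fun (gs i)"
    and h_cc: "closed_convex_fun h"
    and U_open: "open U"
    and U_sup: "edom (block_sum blk gs) \<times> edom h \<subseteq> U"
    and f_diff: "\<And>z. z \<in> U \<Longrightarrow> (f has_derivative (\<lambda>v. gradf z \<bullet> v)) (at z)"
    and grad_lip: "\<And>z z'. z \<in> U \<Longrightarrow> z' \<in> U \<Longrightarrow> norm (gradf z - gradf z') \<le> L * norm (z - z')"
    and f_sc: "\<And>x. x \<in> edom (block_sum blk gs) \<Longrightarrow> strongly_concave_on \<mu> UNIV (\<lambda>y. f (x, y))"
    (* Assumption B *)
    and D_prob: "prob_space D"
    and orc_meas: "\<And>x y. x \<in> edom (block_sum blk gs) \<Longrightarrow> y \<in> edom h \<Longrightarrow>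
                     orc x y \<in> borel_measurable D"
    and orc_unbiased: "\<And>x y. x \<in> edom (block_sum blk gs) \<Longrightarrow> y \<in> edom h \<Longrightarrow>
                     integrable D (orc x y) \<and> (\<integral>w. orc x y w \<partial>D) = snd (gradf (x, y))"
    and orc_var: "\<And>x y. x \<in> edom (block_sum blk gs) \<Longrightarrow> y \<in> edom h \<Longrightarrow>
                     integrable D (\<lambda>w. (norm (orc x y w - snd (gradf (x, y))))\<^sup>2) \<and>
                     (\<integral>w. (norm (orc x y w - snd (gradf (x, y))))\<^sup>2 \<partial>D) \<le> \<sigma>y\<^sup>2"
    and My_pos: "My \<ge> 1"
    and \<zeta>_space: "\<And>j. j < My \<Longrightarrow> \<zeta> j \<in> space D"
    (* the point and step size *)
    and xbar_dom: "xbar \<in> edom (block_sum blk gs)"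
    and ybar_dom: "ybar \<in> edom h"
    and eta_pos: "\<eta>y > 0"
  shows "let G = G_y h \<eta>y orc My xbar ybar \<zeta>;
             s = s_y orc My xbar ybar \<zeta>;
             ys = ystar f h xbar;
             yplus = prox (scale_fun \<eta>y h) (ybar + \<eta>y *\<^sub>R s)
         in 2 * \<eta>y * (G \<bullet> (ybar - ys)) + \<eta>y\<^sup>2 * (norm G)\<^sup>2
            \<le> - \<eta>y * \<mu> * (norm (ybar - ys))\<^sup>2 - \<eta>y\<^sup>2 * (1 - L * \<eta>y) * (norm G)\<^sup>2
              + 2 * \<eta>y * ((s - snd (gradf (xbar, ybar))) \<bullet> (yplus - ys))"
proof -
  define F where "F = (\<lambda>y. f (xbar, y))"
  define hr where "hr = (\<lambda>y. real_of_ereal (h y))"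
  define s where "s = s_y orc My xbar ybar \<zeta>"
  define u where "u = ybar + \<eta>y *\<^sub>R s"
  define yp where "yp = prox (scale_fun \<eta>y h) u"
  define G where "G = G_y h \<eta>y orc My xbar ybar \<zeta>"
  define ys where "ys = ystar f h xbar"
  define gb where "gb = snd (gradf (xbar, ybar))"
  have G_eq: "G = (1/\<eta>y) *\<^sub>R (yp - ybar)" by (simp add: G_def G_y_def yp_def u_def s_def)
  have inU: "\<And>y. y \<in> edom h \<Longrightarrow> (xbar, y) \<in> U" using U_sup xbar_dom by auto
  have F_sc: "strongly_concave_on \<mu> UNIV F" using f_sc[OF xbar_dom] by (simp add: F_def)
  have hfin: "\<And>y. y \<in> edom h \<Longrightarrow> h y = ereal (hr y)" using cc_fin[OF h_cc] by (simp add: hr_def)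
  have hinf: "\<And>y. y \<notin> edom h \<Longrightarrow> h y = \<infinity>" by (simp add: edom_def)
  have fo: "F y \<le> F ybar + gb \<bullet> (y - ybar) - \<mu> / 2 * (norm (y - ybar))\<^sup>2" for y
  proof -
    have "((\<lambda>t. F (ybar + t *\<^sub>R (y - ybar))) has_real_derivative
        (snd (gradf (xbar, ybar + 0 *\<^sub>R (y - ybar))) \<bullet> (y - ybar))) (at 0)"
      unfolding F_def by (rule path_deriv[where U=U]) (use inU[OF ybar_dom] f_diff in auto)
    from sc_first_order[OF F_sc this] show ?thesis by (simp add: gb_def)
  qed
  have contq: "continuous_on UNIV (\<lambda>v. (norm (v - u))\<^sup>2 / 2)" by (intro continuous_intros) auto
  obtain v1 where v1: "v1 \<in> edom h"
    and v1m: "\<And>w. w \<in> edom h \<Longrightarrow> \<eta>y * hr v1 + (norm (v1 - u))\<^sup>2 / 2 \<le> \<eta>y * hr w + (norm (w - u))\<^sup>2 / 2"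
    using min_exists[OF h_cc eta_pos contq, of "1/2" 0 0 u] unfolding hr_def by auto
  have "scale_fun \<eta>y h v1 + ereal ((norm (v1 - u))\<^sup>2 / 2) \<le> scale_fun \<eta>y h w + ereal ((norm (w - u))\<^sup>2 / 2)" for w
  proof (cases "w \<in> edom h")
    case True
    then show ?thesis using v1m[OF True] hfin[OF True] hfin[OF v1] by (simp add: scale_fun_def)
  next
    case False
    then show ?thesis using hinf[OF False] eta_pos by (simp add: scale_fun_def)
  qed
  then have "\<exists>v. \<forall>w. scale_fun \<eta>y h v + ereal ((norm (v - u))\<^sup>2 / 2) \<le> scale_fun \<eta>y h w + ereal ((norm (w - u))\<^sup>2 / 2)"
    by blast
  then have ypm: "\<And>w. scale_fun \<eta>y h yp + ereal ((norm (yp - u))\<^sup>2 / 2) \<le> scale_fun \<eta>y h w + ereal ((norm (w - u))\<^sup>2 / 2)"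
    unfolding yp_def prox_def by (rule someI_ex[where P = "\<lambda>v. \<forall>w. _ v w", THEN spec])
  have yp_dom: "yp \<in> edom h"
  proof (rule ccontr)
    assume "yp \<notin> edom h"
    then have "scale_fun \<eta>y h yp + ereal ((norm (yp - u))\<^sup>2 / 2) = \<infinity>"
      using hinf eta_pos by (simp add: scale_fun_def)
    moreover have "scale_fun \<eta>y h ybar + ereal ((norm (ybar - u))\<^sup>2 / 2) < \<infinity>"
      using hfin[OF ybar_dom] by (simp add: scale_fun_def)
    ultimately show False using ypm[of ybar] by simp
  qed
  have yp_min: "\<eta>y * hr yp + (norm (yp - u))\<^sup>2 / 2 \<le> \<eta>y * hr w + (norm (w - u))\<^sup>2 / 2"
    if w: "w \<in> edom h" for w
    using ypm[of w] hfin[OF w] hfin[OF yp_dom] by (simp add: scale_fun_def)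
  have Fconv: "convex_on UNIV (\<lambda>y. - F y)"
  proof (rule convex_onI)
    fix t :: real and x y :: 'y assume t: "0 < t" "t < 1"
    have "(1 - t) * F x + (1 - (1 - t)) * F y + \<mu> / 2 * (1 - t) * (1 - (1 - t)) * (norm (x - y))\<^sup>2
        \<le> F ((1 - t) *\<^sub>R x + (1 - (1 - t)) *\<^sub>R y)"
      using sc_all[OF F_sc, of "1 - t" x y] t by simp
    moreover have "\<mu> / 2 * (1 - t) * (1 - (1 - t)) * (norm (x - y))\<^sup>2 \<ge> 0"
      using mu_pos t by simp
    ultimately show "- F ((1 - t) *\<^sub>R x + t *\<^sub>R y) \<le> (1 - t) * - F x + t * - F y" by simp
  qed simp
  have Fcont: "continuous_on UNIV (\<lambda>y. - F y)"
    by (rule convex_on_continuous[OF open_UNIV Fconv])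
  have lbF: "(- gb) \<bullet> v + (gb \<bullet> ybar - F ybar) + \<mu> / 2 * (norm (v - ybar))\<^sup>2 \<le> - F v" for v
    using fo[of v] by (simp add: inner_diff_right)
  obtain v0 where v0: "v0 \<in> edom h"
    and v0m: "\<And>w. w \<in> edom h \<Longrightarrow> 1 * hr v0 + - F v0 \<le> 1 * hr w + - F w"
    using min_exists[OF h_cc _ Fcont, of 1 "\<mu>/2" "- gb" "gb \<bullet> ybar - F ybar" ybar] lbF mu_pos
    unfolding hr_def by auto
  have "ereal (f (xbar, y')) - h y' \<le> ereal (f (xbar, v0)) - h v0" for y'
  proof (cases "y' \<in> edom h")
    case True
    then show ?thesis using v0m[OF True] hfin[OF True] hfin[OF v0] by (simp add: F_def)
  next
    case False
    then show ?thesis using hinf[OF False] by simp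
  qed
  then have "\<exists>y. \<forall>y'. ereal (f (xbar, y')) - h y' \<le> ereal (f (xbar, y)) - h y" by blast
  then have ysm: "\<And>y'. ereal (f (xbar, y')) - h y' \<le> ereal (f (xbar, ys)) - h ys"
    unfolding ys_def ystar_def by (rule someI_ex[where P = "\<lambda>v. \<forall>w. _ v w", THEN spec])
  have ys_dom: "ys \<in> edom h"
  proof (rule ccontr)
    assume "ys \<notin> edom h"
    then have "ereal (f (xbar, ys)) - h ys = - \<infinity>" using hinf by simp
    then show False using ysm[of v0] hfin[OF v0] by simp
  qed
  have yopt: "F yp - hr yp \<le> F ys - hr ys"
    using ysm[of yp] hfin[OF yp_dom] hfin[OF ys_dom] by (simp add: F_def)
  have popt: "\<eta>y * hr yp + (u - yp) \<bullet> (ys - yp) \<le> \<eta>y * hr ys"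
    using prox_opt[OF h_cc eta_pos yp_dom _ ys_dom, of u] yp_min unfolding hr_def by blast
  define d where "d = yp - ybar"
  have seg: "ybar + t *\<^sub>R d \<in> edom h" if "0 \<le> t" "t \<le> 1" for t
  proof -
    have "ybar + t *\<^sub>R d = t *\<^sub>R yp + (1 - t) *\<^sub>R ybar" by (simp add: d_def algebra_simps)
    then show ?thesis using cc_ineq[OF h_cc yp_dom ybar_dom that] by simp
  qed
  have desc: "F (ybar + 1 *\<^sub>R d) \<ge> F (ybar + 0 *\<^sub>R d) + snd (gradf (xbar, ybar + 0 *\<^sub>R d)) \<bullet> d - L / 2 * (norm d)\<^sup>2"
  proof (rule descent[where G = "\<lambda>t. F (ybar + t *\<^sub>R d)" and gr = "\<lambda>t. snd (gradf (xbar, ybar + t *\<^sub>R d)) \<bullet> d"])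
    fix t :: real assume t: "0 \<le> t" "t \<le> 1"
    show "((\<lambda>t. F (ybar + t *\<^sub>R d)) has_real_derivative snd (gradf (xbar, ybar + t *\<^sub>R d)) \<bullet> d) (at t)"
      unfolding F_def by (rule path_deriv[where U=U]) (use inU[OF seg[OF t]] f_diff in auto)
    have zin: "(xbar, ybar + t *\<^sub>R d) \<in> U" "(xbar, ybar + 0 *\<^sub>R d) \<in> U" using inU[OF seg[OF t]] inU[OF ybar_dom] by auto
    have "norm (snd (gradf (xbar, ybar + t *\<^sub>R d)) - snd (gradf (xbar, ybar + 0 *\<^sub>R d)))
        \<le> norm (gradf (xbar, ybar + t *\<^sub>R d) - gradf (xbar, ybar + 0 *\<^sub>R d))"
      using norm_snd_le'[of "gradf (xbar, ybar + t *\<^sub>R d) - gradf (xbar, ybar + 0 *\<^sub>R d)"] by simp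
    also have "\<dots> \<le> L * norm ((xbar, ybar + t *\<^sub>R d) - (xbar, ybar + 0 *\<^sub>R d))"
      using grad_lip[OF zin] .
    also have "\<dots> = L * (t * norm d)" using t by (simp add: norm_Pair)
    finally have nl: "norm (snd (gradf (xbar, ybar + t *\<^sub>R d)) - snd (gradf (xbar, ybar + 0 *\<^sub>R d))) \<le> L * (t * norm d)" .
    have "(snd (gradf (xbar, ybar + t *\<^sub>R d)) - snd (gradf (xbar, ybar + 0 *\<^sub>R d))) \<bullet> d
        \<ge> - (norm (snd (gradf (xbar, ybar + t *\<^sub>R d)) - snd (gradf (xbar, ybar + 0 *\<^sub>R d))) * norm d)"
      using Cauchy_Schwarz_ineq2 by (simp add: abs_le_iff) (smt (verit) Cauchy_Schwarz_ineq2 abs_le_iff)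
    moreover have "norm (snd (gradf (xbar, ybar + t *\<^sub>R d)) - snd (gradf (xbar, ybar + 0 *\<^sub>R d))) * norm d
        \<le> L * (t * norm d) * norm d" using nl by (simp add: mult_right_mono)
    ultimately show "- (L * t * (norm d)\<^sup>2) \<le> snd (gradf (xbar, ybar + t *\<^sub>R d)) \<bullet> d - snd (gradf (xbar, ybar + 0 *\<^sub>R d)) \<bullet> d"
      by (simp add: inner_diff_left power2_eq_square algebra_simps)
  qed
  have desc': "F yp \<ge> F ybar + gb \<bullet> (yp - ybar) - L / 2 * (\<eta>y\<^sup>2 * (norm G)\<^sup>2)"
  proof -
    have "d = \<eta>y *\<^sub>R G" using eta_pos by (simp add: G_eq d_def)
    then have "(norm d)\<^sup>2 = \<eta>y\<^sup>2 * (norm G)\<^sup>2"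
      by (simp add: power_mult_distrib)
    then show ?thesis using desc by (simp add: d_def gb_def)
  qed
  have e1: "yp = ybar + \<eta>y *\<^sub>R G" using eta_pos by (simp add: G_eq)
  have e3: "u - yp = \<eta>y *\<^sub>R (s - G)" by (simp add: u_def e1 algebra_simps)
  have popt': "hr yp + (s - G) \<bullet> (ys - yp) \<le> hr ys"
  proof -
    have "\<eta>y * (hr yp + (s - G) \<bullet> (ys - yp)) \<le> \<eta>y * hr ys"
      using popt unfolding e3 by (simp add: algebra_simps)
    then show ?thesis using eta_pos by simp
  qed
  have fo': "F ys \<le> F ybar + gb \<bullet> (ys - ybar) - \<mu> / 2 * (norm (ybar - ys))\<^sup>2"
    using fo[of ys] by (simp add: norm_minus_commute)
  have e4: "gb \<bullet> (ys - ybar) - gb \<bullet> (yp - ybar) = gb \<bullet> (ys - yp)" by (simp add: inner_diff_right)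
  have e5: "(s - G) \<bullet> (ys - yp) = s \<bullet> (ys - yp) - G \<bullet> (ys - yp)" by (simp add: inner_diff_left)
  have e6: "(s - gb) \<bullet> (yp - ys) = gb \<bullet> (ys - yp) - s \<bullet> (ys - yp)" by (simp add: inner_diff_left inner_diff_right)
  have e7: "G \<bullet> (ys - yp) = - (G \<bullet> (ybar - ys)) - \<eta>y * (norm G)\<^sup>2"
    unfolding e1 by (simp add: inner_diff_right inner_add_right power2_norm_eq_inner)
  have key: "0 \<le> (s - gb) \<bullet> (yp - ys) - G \<bullet> (ybar - ys) - \<eta>y * (norm G)\<^sup>2
      - \<mu> / 2 * (norm (ybar - ys))\<^sup>2 + L / 2 * (\<eta>y\<^sup>2 * (norm G)\<^sup>2)"
    using desc' fo' yopt popt' e4 e5 e6 e7 by linarith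
  have "0 \<le> 2 * \<eta>y * ((s - gb) \<bullet> (yp - ys) - G \<bullet> (ybar - ys) - \<eta>y * (norm G)\<^sup>2
      - \<mu> / 2 * (norm (ybar - ys))\<^sup>2 + L / 2 * (\<eta>y\<^sup>2 * (norm G)\<^sup>2))"
    using key eta_pos by simp
  from final_alg[OF this] show ?thesis
    unfolding Let_def G_def[symmetric] s_def[symmetric] ys_def[symmetric] gb_def[symmetric]
    unfolding u_def[symmetric] yp_def[symmetric] by simp
qed

end
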